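(* The interaction-free subspace satisfies $W=\operatorname{ran}|Z|_1^\perp$, where $|Z|_1^\perp=P_1-Z_1^*Z_1$.
   Context: Fix integers $N\ge 2$ and $n_1\ge n_2\ge\dots\ge n_N\ge 1$. Let $\mathcal H$ be a finite-dimensional complex Hilbert space with orthonormal basis $\{|-\rangle,|+\rangle\}\cup\{|a_k\rangle:1\le k\le N,\ 0\le a\le n_k-1\}$. For vectors $x,y$, $|x\rangle\langle y|$ denotes the operator $u\mapsto\langle y,u\rangle x$. Put $E_k=\mathrm{span}\{|a_k\rangle:0\le a\le n_k-1\}$, $P_k$ the orthogonal projection onto $E_k$, $\zeta_k=e^{2\pi i/n_k}$, and $\varphi_{a_k}=n_k^{-1/2}\sum_{b=0}^{n_k-1}\zeta_k^{-ba}|b_k\rangle$. For $1\le k\le N-1$ let $Z_k=n_k^{-1/2}\sum_{b=0}^{n_{k+1}-1}\sum_{a=0}^{n_k-1}\zeta_k^{ba}|b_{k+1}\rangle\langle a_k|$ (an operator on $\mathcal H$). Let $\omega$ range over $\{\omega_+,\omega_-,\omega_1,\dots,\omega_{N-1}\}$ and let $\Gamma_{\pm,\omega}>0$ be constants. Kraus operators: $L_{-,\omega_+}=\sqrt{n_1\Gamma_{-,\omega_+}}|\varphi_{0_1}\rangle\langle +|$, $L_{+,\omega_+}=\sqrt{n_1\Gamma_{+,\omega_+}}|+\rangle\langle\varphi_{0_1}|$, $L_{-,\omega_k}=\sqrt{\Gamma_{-,\omega_k}}Z_k$, $L_{+,\omega_k}=\sqrt{\Gamma_{+,\omega_k}}Z_k^*$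 ($1\le k\le N-1$), $L_{-,\omega_-}=\sqrt{\Gamma_{-,\omega_-}}|-\rangle\langle\varphi_{0_N}|$, $L_{+,\omega_-}=0$. The interaction-free subspace is $W=\bigcap_{\omega}\bigcap_{\epsilon=\pm}(\ker L_{\epsilon,\omega}\cap\ker L_{\epsilon,\omega}^* )$. *)

theory Defs
  imports Complex_Main
begin

text \<open>Basis labels of the Hilbert space: BMinus = |->, BPlus = |+>,
  BL k a = |a_k> (relevant only for 1 \<le> k \<le> N, a < n k).\<close>
datatype bidx = BMinus | BPlus | BL nat nat

datatype omega = OPlus | OMinus | OK nat
datatype sgn = SPlus | SMinus

definition basis_idx :: "nat \<Rightarrow> (nat \<Rightarrow> nat) \<Rightarrow> bidx set" where
  "basis_idx N n = {BMinus, BPlus} \<union> {BL k a | k a. 1 \<le> k \<and> k \<le> N \<and> a < n k}"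

definition hspace :: "nat \<Rightarrow> (nat \<Rightarrow> nat) \<Rightarrow> (bidx \<Rightarrow> complex) set" where
  "hspace N n = {v. \<forall>i. i \<notin> basis_idx N n \<longrightarrow> v i = 0}"

definition ket :: "bidx \<Rightarrow> bidx \<Rightarrow> complex" where
  "ket i = (\<lambda>j. if j = i then 1 else 0)"

type_synonym op = "bidx \<Rightarrow> bidx \<Rightarrow> complex"

definition apply_op :: "nat \<Rightarrow> (nat \<Rightarrow> nat) \<Rightarrow> op \<Rightarrow> (bidx \<Rightarrow> complex) \<Rightarrow> (bidx \<Rightarrow> complex)" where
  "apply_op N n A v = (\<lambda>i. if i \<in> basis_idx N n then (\<Sum>j\<in>basis_idx N n. A i j * v j) else 0)"

definition adj :: "op \<Rightarrow> op" where
  "adj A = (\<lambda>i j. cnj (A j i))"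

definition mmult :: "nat \<Rightarrow> (nat \<Rightarrow> nat) \<Rightarrow> op \<Rightarrow> op \<Rightarrow> op" where
  "mmult N n A B = (\<lambda>i j. \<Sum>l\<in>basis_idx N n. A i l * B l j)"

text \<open>|x><y| as the matrix with entries x_i * conj(y_j), i.e. u \<mapsto> <y,u> x.\<close>
definition outer :: "(bidx \<Rightarrow> complex) \<Rightarrow> (bidx \<Rightarrow> complex) \<Rightarrow> op" where
  "outer x y = (\<lambda>i j. x i * cnj (y j))"

definition zeta :: "(nat \<Rightarrow> nat) \<Rightarrow> nat \<Rightarrow> complex" where
  "zeta n k = exp (2 * pi * \<i> / of_nat (n k))"

definition phi :: "(nat \<Rightarrow> nat) \<Rightarrow> nat \<Rightarrow> nat \<Rightarrow> bidx \<Rightarrow> complex" where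
  "phi n k a = (\<lambda>i. (1 / complex_of_real (sqrt (real (n k)))) *
      (\<Sum>b<n k. inverse (zeta n k) ^ (b * a) * ket (BL k b) i))"

definition proj :: "(nat \<Rightarrow> nat) \<Rightarrow> nat \<Rightarrow> op" where
  "proj n k = (\<lambda>i j. \<Sum>a<n k. outer (ket (BL k a)) (ket (BL k a)) i j)"

definition Zop :: "(nat \<Rightarrow> nat) \<Rightarrow> nat \<Rightarrow> op" where
  "Zop n k = (\<lambda>i j. (1 / complex_of_real (sqrt (real (n k)))) *
      (\<Sum>b<n (k+1). \<Sum>a<n k. zeta n k ^ (b * a) * outer (ket (BL (k+1) b)) (ket (BL k a)) i j))"

definition smult_op :: "complex \<Rightarrow> op \<Rightarrow> op" where
  "smult_op c A = (\<lambda>i j. c * A i j)"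

definition kraus :: "nat \<Rightarrow> (nat \<Rightarrow> nat) \<Rightarrow> (sgn \<Rightarrow> omega \<Rightarrow> real) \<Rightarrow> sgn \<Rightarrow> omega \<Rightarrow> op" where
  "kraus N n Gam e w =
     (case (e, w) of
        (SMinus, OPlus) \<Rightarrow> smult_op (complex_of_real (sqrt (real (n 1) * Gam SMinus OPlus)))
                              (outer (phi n 1 0) (ket BPlus))
      | (SPlus, OPlus) \<Rightarrow> smult_op (complex_of_real (sqrt (real (n 1) * Gam SPlus OPlus)))
                              (outer (ket BPlus) (phi n 1 0))
      | (SMinus, OK k) \<Rightarrow> smult_op (complex_of_real (sqrt (Gam SMinus (OK k)))) (Zop n k)
      | (SPlus, OK k) \<Rightarrow> smult_op (complex_of_real (sqrt (Gam SPlus (OK k)))) (adj (Zop n k))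
      | (SMinus, OMinus) \<Rightarrow> smult_op (complex_of_real (sqrt (Gam SMinus OMinus)))
                              (outer (ket BMinus) (phi n N 0))
      | (SPlus, OMinus) \<Rightarrow> (\<lambda>i j. 0))"

definition omegas :: "nat \<Rightarrow> omega set" where
  "omegas N = {OPlus, OMinus} \<union> {OK k | k. 1 \<le> k \<and> k \<le> N - 1}"

definition kernel :: "nat \<Rightarrow> (nat \<Rightarrow> nat) \<Rightarrow> op \<Rightarrow> (bidx \<Rightarrow> complex) set" where
  "kernel N n A = {v \<in> hspace N n. apply_op N n A v = (\<lambda>i. 0)}"

definition op_range :: "nat \<Rightarrow> (nat \<Rightarrow> nat) \<Rightarrow> op \<Rightarrow> (bidx \<Rightarrow> complex) set" where
  "op_range N n A = apply_op N n A ` hspace N n"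

definition interaction_free :: "nat \<Rightarrow> (nat \<Rightarrow> nat) \<Rightarrow> (sgn \<Rightarrow> omega \<Rightarrow> real) \<Rightarrow> (bidx \<Rightarrow> complex) set" where
  "interaction_free N n Gam =
     hspace N n \<inter> (\<Inter>w\<in>omegas N. \<Inter>e\<in>{SPlus, SMinus}.
        kernel N n (kraus N n Gam e w) \<inter> kernel N n (adj (kraus N n Gam e w)))"

end

theory Submission
  imports Defs "HOL-Analysis.Analysis"
begin

lemma ortho:
  fixes m b b' :: nat
  assumes "b < m" "b' < m"
  shows "(\<Sum>a<m. exp (2 * pi * \<i> / of_nat m) ^ (b*a) * cnj (exp (2 * pi * \<i> / of_nat m) ^ (b'*a)))
         = (if b = b' then of_nat m else 0)"
proof -
  define w where "w = exp (2 * pi * \<i> * of_int (int b - int b') / of_nat m)"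
  have m0: "m > 0" using assms by auto
  have trm: "exp (2 * pi * \<i> / of_nat m) ^ (b*a) * cnj (exp (2 * pi * \<i> / of_nat m) ^ (b'*a)) = w ^ a" for a
  proof -
    have "exp (2 * pi * \<i> / of_nat m) ^ (b*a) * cnj (exp (2 * pi * \<i> / of_nat m) ^ (b'*a))
        = exp (of_nat (b*a) * (2 * pi * \<i> / of_nat m)) * exp (cnj (of_nat (b'*a) * (2 * pi * \<i> / of_nat m)))"
      by (simp only: exp_of_nat_mult flip: exp_cnj)
    also have "\<dots> = exp (of_nat (b*a) * (2 * pi * \<i> / of_nat m) + cnj (of_nat (b'*a) * (2 * pi * \<i> / of_nat m)))"
      by (simp only: exp_add)
    also have "of_nat (b*a) * (2 * pi * \<i> / of_nat m) + cnj (of_nat (b'*a) * (2 * pi * \<i> / of_nat m))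
        = of_nat a * (2 * pi * \<i> * of_int (int b - int b') / of_nat m)"
      using m0 by (simp add: field_simps complex_eq_iff)
    finally show ?thesis by (simp only: w_def exp_of_nat_mult)
  qed
  have wm: "w ^ m = 1"
  proof -
    have "w ^ m = exp (of_nat m * (2 * pi * \<i> * of_int (int b - int b') / of_nat m))"
      by (simp only: w_def exp_of_nat_mult)
    also have "of_nat m * (2 * pi * \<i> * of_int (int b - int b') / of_nat m) = (2 * of_int (int b - int b') * pi) * \<i>"
      using m0 by simp
    also have "exp \<dots> = 1" by (rule exp_integer_2pi) simp
    finally show ?thesis .
  qed
  have sumw: "(\<Sum>a<m. exp (2 * pi * \<i> / of_nat m) ^ (b*a) * cnj (exp (2 * pi * \<i> / of_nat m) ^ (b'*a)))
         = (\<Sum>a<m. w ^ a)" by (simp only: trm)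
  have fin: "(\<Sum>a<m. w ^ a) = (if b = b' then of_nat m else 0)"
  proof (cases "b = b'")
    case True
    then show ?thesis by (simp add: w_def)
  next
    case False
    have "w \<noteq> 1"
    proof
      assume "w = 1"
      then obtain k :: int where k: "Im (2 * pi * \<i> * of_int (int b - int b') / of_nat m) = of_int (2 * k) * pi"
        unfolding w_def exp_eq_1 by blast
      have h: "pi * (real b * 2) = pi * (real b' * 2 + real_of_int k * real m * 2)"
        using k m0 by (simp add: field_simps)
      have "real b * 2 = real b' * 2 + real_of_int k * real m * 2"
        using h by simp
      then have "of_int (int b - int b') = real m * of_int k"
        by (simp add: algebra_simps)
      then have e: "int b - int b' = int m * k" by (metis of_int_eq_iff of_int_mult of_int_of_nat_eq)
      show False
      proof (cases "k = 0")
        case True then show False using e False by simp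
      next
        case False
        then have k1: "1 \<le> \<bar>k\<bar>" by linarith
        have "int m * 1 \<le> int m * \<bar>k\<bar>" by (rule mult_left_mono[OF k1]) simp
        then have "\<bar>int m * k\<bar> \<ge> int m" by (simp add: abs_mult)
        then show False using e assms by linarith
      qed
    qed
    then show ?thesis using False by (simp add: sum_gp_strict wm)
  qed
  show ?thesis by (rule trans[OF sumw fin])
qed

lemma ortho_zeta:
  assumes "b < n k" "b' < n k"
  shows "(\<Sum>a<n k. zeta n k ^ (b*a) * cnj (zeta n k ^ (b'*a))) = (if b = b' then of_nat (n k) else 0)"
  unfolding zeta_def using ortho[OF assms] .


definition sc :: "(nat \<Rightarrow> nat) \<Rightarrow> nat \<Rightarrow> complex" where
  "sc n k = 1 / complex_of_real (sqrt (real (n k)))"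

definition EE :: "(nat \<Rightarrow> nat) \<Rightarrow> nat \<Rightarrow> bidx set" where
  "EE n k = BL k ` {..<n k}"

lemma BL_in_B: "BL k a \<in> basis_idx N n \<longleftrightarrow> 1 \<le> k \<and> k \<le> N \<and> a < n k"
  by (auto simp: basis_idx_def)

lemma pm_in_B: "BMinus \<in> basis_idx N n" "BPlus \<in> basis_idx N n"
  by (auto simp: basis_idx_def)

lemma finB: "finite (basis_idx N n)"
proof -
  have "basis_idx N n \<subseteq> {BMinus, BPlus} \<union> (\<Union>k\<le>N. BL k ` {..<n k})"
    by (auto simp: basis_idx_def)
  moreover have "finite ({BMinus, BPlus} \<union> (\<Union>k\<le>N. BL k ` {..<n k}))" by auto
  ultimately show ?thesis by (rule finite_subset)
qed

lemma EE_sub: "1 \<le> k \<Longrightarrow> k \<le> N \<Longrightarrow> EE n k \<subseteq> basis_idx N n"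
  by (auto simp: EE_def BL_in_B)

lemma sum_E:
  assumes "1 \<le> k" "k \<le> N" "\<forall>j\<in>basis_idx N n. j \<notin> EE n k \<longrightarrow> g j = 0"
  shows "sum g (basis_idx N n) = (\<Sum>a<n k. g (BL k a))"
proof -
  have "sum g (basis_idx N n) = sum g (EE n k)"
    by (rule sum.mono_neutral_right[OF finB EE_sub[OF assms(1,2)]]) (use assms(3) in blast)
  also have "\<dots> = (\<Sum>a<n k. g (BL k a))"
    unfolding EE_def by (subst sum.reindex) (auto simp: inj_on_def)
  finally show ?thesis .
qed

lemma if10_mult[simp]:
  "(if P then 1 else 0) * (x::complex) = (if P then x else 0)"
  "x * (if P then 1 else 0) = (if P then x else 0)"
  "cnj (if P then 1 else 0) = (if P then 1 else 0)"
  "x * (if P then if Q then 1 else 0 else 0) = (if P then (if Q then x else 0) else 0)"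
  by auto

lemma ket_sum: "i0 \<in> basis_idx N n \<Longrightarrow> (\<Sum>j\<in>basis_idx N n. cnj (ket i0 j) * v j) = v i0"
  by (simp add: ket_def ) (simp add: finB)

lemma Zop_BL: "Zop n k (BL k1 b) (BL k2 a) =
   (if k1 = k+1 \<and> k2 = k \<and> b < n (k+1) \<and> a < n k then sc n k * zeta n k ^ (b*a) else 0)"
  by (auto simp: Zop_def outer_def ket_def sc_def cong: if_cong)

lemma Zop_zero: "i \<notin> EE n (k+1) \<or> j \<notin> EE n k \<Longrightarrow> Zop n k i j = 0"
  by (cases i; cases j) (auto simp: Zop_BL EE_def, auto simp: Zop_def outer_def ket_def cong: if_cong)

lemma phi_BL: "phi n k 0 (BL k1 b) = (if k1 = k \<and> b < n k then sc n k else 0)"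
  by (auto simp: phi_def ket_def sc_def cong: if_cong)

lemma phi_zero: "i \<notin> EE n k \<Longrightarrow> phi n k 0 i = 0"
  by (cases i) (auto simp: phi_BL EE_def, auto simp: phi_def ket_def cong: if_cong)

lemma cnj_sc[simp]: "cnj (sc n k) = sc n k"
  by (simp add: sc_def)

lemma proj_entry: "proj n k i j = (if i = j \<and> i \<in> EE n k then 1 else 0)"
proof -
  have e: "proj n k i j = (\<Sum>a<n k. if i = BL k a \<and> j = BL k a then 1 else 0)"
    unfolding proj_def outer_def ket_def by (intro sum.cong) auto
  show ?thesis
  proof (cases "i = j \<and> i \<in> EE n k")
    case True
    then obtain a0 where "a0 < n k" "i = BL k a0" "j = BL k a0" by (auto simp: EE_def)
    then show ?thesis unfolding e using True by (simp add: EE_def cong: if_cong)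
  next
    case False
    then show ?thesis unfolding e by (auto simp: EE_def intro!: sum.neutral)
  qed
qed


lemma apply_hspace: "apply_op N n A v \<in> hspace N n"
  by (simp add: apply_op_def hspace_def)

lemma apply_cols:
  assumes "1 \<le> k" "k \<le> N" "\<And>j. j \<notin> EE n k \<Longrightarrow> A i j = 0 \<or> v j = 0"
  shows "apply_op N n A v i = (if i \<in> basis_idx N n then (\<Sum>a<n k. A i (BL k a) * v (BL k a)) else 0)"
  unfolding apply_op_def using assms by (auto intro!: sum_E)

lemma apply_rows: "(\<And>j. A i j = 0) \<Longrightarrow> apply_op N n A v i = 0"
  by (simp add: apply_op_def)

lemma apply_mmult: "apply_op N n (mmult N n A C) v = apply_op N n A (apply_op N n C v)"
proof (rule ext)
  fix i
  let ?B = "basis_idx N n"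
  have "(\<Sum>j\<in>?B. (\<Sum>l\<in>?B. A i l * C l j) * v j) = (\<Sum>l\<in>?B. A i l * (\<Sum>j\<in>?B. C l j * v j))"
    by (simp add: sum_distrib_left sum_distrib_right mult.assoc) (rule sum.swap)
  also have "\<dots> = (\<Sum>l\<in>?B. A i l * apply_op N n C v l)"
    by (rule sum.cong) (auto simp: apply_op_def)
  finally show "apply_op N n (mmult N n A C) v i = apply_op N n A (apply_op N n C v) i"
    by (simp add: apply_op_def mmult_def)
qed

lemma apply_diff: "apply_op N n (\<lambda>i j. A i j - C i j) v = (\<lambda>i. apply_op N n A v i - apply_op N n C v i)"
  by (auto simp: apply_op_def fun_eq_iff left_diff_distrib sum_subtractf)

lemma apply_smult: "apply_op N n (smult_op c A) v = (\<lambda>i. c * apply_op N n A v i)"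
  by (auto simp: apply_op_def smult_op_def fun_eq_iff sum_distrib_left mult.assoc)

lemma kernel_smult: "c \<noteq> 0 \<Longrightarrow> kernel N n (smult_op c A) = kernel N n A"
  by (auto simp: kernel_def apply_smult fun_eq_iff)

lemma adj_smult: "adj (smult_op c A) = smult_op (cnj c) (adj A)"
  by (simp add: adj_def smult_op_def)

lemma adj_outer: "adj (outer x y) = outer y x"
  by (simp add: adj_def outer_def mult.commute)

lemma kernel_kill: "v \<in> hspace N n \<Longrightarrow> (\<And>i j. A i j = 0 \<or> v j = 0) \<Longrightarrow> v \<in> kernel N n A"
  unfolding kernel_def apply_op_def
  by (auto simp: fun_eq_iff intro!: sum.neutral)

lemma kernel_outer:
  assumes "i0 \<in> basis_idx N n" "x i0 \<noteq> 0"
  shows "kernel N n (outer x y) = {v \<in> hspace N n. (\<Sum>j\<in>basis_idx N n. cnj (y j) * v j) = 0}"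
proof -
  have ap: "apply_op N n (outer x y) v = (\<lambda>i. if i \<in> basis_idx N n then x i * (\<Sum>j\<in>basis_idx N n. cnj (y j) * v j) else 0)" for v
    by (auto simp: apply_op_def outer_def fun_eq_iff sum_distrib_left intro!: sum.cong)
  show ?thesis
    unfolding kernel_def ap using assms by (auto simp: fun_eq_iff)
qed

lemma sc_nz: "n k > 0 \<Longrightarrow> sc n k \<noteq> 0"
  by (simp add: sc_def)

lemma sc_sq: "n k > 0 \<Longrightarrow> sc n k * (sc n k * of_nat (n k)) = 1"
proof -
  assume "n k > 0"
  then have "complex_of_real (sqrt (real (n k))) * complex_of_real (sqrt (real (n k))) = of_nat (n k)"
    by (simp flip: of_real_mult)
  then show ?thesis using \<open>n k > 0\<close> by (simp add: sc_def field_simps)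
qed

context
  fixes N :: nat and n :: "nat \<Rightarrow> nat" and k :: nat
  assumes k1: "1 \<le> k" and kN: "k + 1 \<le> N"
begin

lemma Zapp_BL: "b < n (k+1) \<Longrightarrow>
   apply_op N n (Zop n k) v (BL (k+1) b) = sc n k * (\<Sum>a<n k. zeta n k ^ (b*a) * v (BL k a))"
  using k1 kN
  by (subst apply_cols[where k=k]) (auto simp: Zop_zero BL_in_B Zop_BL sum_distrib_left mult.assoc)

lemma Zapp_zero: "i \<notin> EE n (k+1) \<Longrightarrow> apply_op N n (Zop n k) v i = 0"
  by (rule apply_rows) (simp add: Zop_zero)

lemma ZAapp_BL: "a < n k \<Longrightarrow>
   apply_op N n (adj (Zop n k)) v (BL k a) = sc n k * (\<Sum>b<n (k+1). cnj (zeta n k ^ (b*a)) * v (BL (k+1) b))"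
  using k1 kN
  by (subst apply_cols[where k="k+1"]) (auto simp: adj_def Zop_zero BL_in_B Zop_BL sum_distrib_left mult.assoc)

lemma ZAapp_zero: "i \<notin> EE n k \<Longrightarrow> apply_op N n (adj (Zop n k)) v i = 0"
  by (rule apply_rows) (simp add: adj_def Zop_zero)

end


lemma ZZ_core:
  assumes "b0 < m'" "m' \<le> n k"
  shows "(\<Sum>a<n k. zeta n k ^ (b0*a) * (\<Sum>b<m'. cnj (zeta n k ^ (b*a)) * x b)) = of_nat (n k) * x b0"
proof -
  have "(\<Sum>a<n k. zeta n k ^ (b0*a) * (\<Sum>b<m'. cnj (zeta n k ^ (b*a)) * x b))
      = (\<Sum>a<n k. \<Sum>b<m'. (zeta n k ^ (b0*a) * cnj (zeta n k ^ (b*a))) * x b)"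
    by (simp add: sum_distrib_left mult.assoc)
  also have "\<dots> = (\<Sum>b<m'. (\<Sum>a<n k. zeta n k ^ (b0*a) * cnj (zeta n k ^ (b*a))) * x b)"
    by (subst sum.swap) (simp add: sum_distrib_right)
  also have "\<dots> = (\<Sum>b<m'. (if b0 = b then of_nat (n k) else 0) * x b)"
  proof (rule sum.cong[OF refl])
    fix b assume "b \<in> {..<m'}"
    then show "(\<Sum>a<n k. zeta n k ^ (b0*a) * cnj (zeta n k ^ (b*a))) * x b = (if b0 = b then of_nat (n k) else 0) * x b"
      using assms by (subst ortho_zeta) auto
  qed
  also have "\<dots> = (\<Sum>b<m'. if b0 = b then of_nat (n k) * x b else 0)"
    by (rule sum.cong) auto
  also have "\<dots> = of_nat (n k) * x b0"
    using assms by simp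
  finally show ?thesis .
qed

lemma adj_adj: "adj (adj A) = A" by (simp add: adj_def)
lemma adj_zero: "adj (\<lambda>i j. 0) = (\<lambda>i j. 0)" by (simp add: adj_def)

lemma apply_zero_vec: "apply_op N n A (\<lambda>i. 0) = (\<lambda>i. 0)"
  by (auto simp: apply_op_def fun_eq_iff)

lemma apply_lin_diff: "apply_op N n A (\<lambda>i. x i - y i) = (\<lambda>i. apply_op N n A x i - apply_op N n A y i)"
  by (auto simp: apply_op_def fun_eq_iff right_diff_distrib sum_subtractf)

lemma apply_restrict:
  "(\<And>i j. j \<notin> EE n k \<Longrightarrow> A i j = 0) \<Longrightarrow>
    apply_op N n A (\<lambda>i. if i \<in> EE n k then u i else 0) = apply_op N n A u"
  unfolding apply_op_def by (auto simp: fun_eq_iff intro!: sum.cong)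

lemma apply_P:
  assumes "u \<in> hspace N n" "1 \<le> k" "k \<le> N"
  shows "apply_op N n (proj n k) u = (\<lambda>i. if i \<in> EE n k then u i else 0)"
proof (rule ext)
  fix i
  show "apply_op N n (proj n k) u i = (if i \<in> EE n k then u i else 0)"
  proof (cases "i \<in> basis_idx N n")
    case True
    have "(\<Sum>j\<in>basis_idx N n. proj n k i j * u j) = (\<Sum>j\<in>basis_idx N n. if i = j then (if i \<in> EE n k then u j else 0) else 0)"
      by (rule sum.cong) (auto simp: proj_entry)
    also have "\<dots> = (if i \<in> EE n k then u i else 0)"
      using True by (simp add: finB cong: if_cong)
    finally show ?thesis using True by (simp add: apply_op_def)
  next
    case False
    then have "i \<notin> EE n k" using EE_sub[OF assms(2,3)] by blast
    then show ?thesis using False by (simp add: apply_op_def)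
  qed
qed

lemma n_mono:
  fixes N :: nat and n :: "nat \<Rightarrow> nat"
  assumes "\<And>k. 1 \<le> k \<Longrightarrow> k < N \<Longrightarrow> n (k + 1) \<le> n k"
  shows "1 \<le> k \<Longrightarrow> k \<le> N \<Longrightarrow> n N \<le> n k"
proof -
  have "\<forall>k. N - k = d \<longrightarrow> 1 \<le> k \<longrightarrow> k \<le> N \<longrightarrow> n N \<le> n k" for d
  proof (induction d)
    case 0
    then show ?case by (auto simp: le_antisym)
  next
    case (Suc d)
    show ?case
    proof (intro allI impI)
      fix k assume h: "N - k = Suc d" "1 \<le> k" "k \<le> N"
      then have "n N \<le> n (k+1)" using Suc.IH by auto
      also have "n (k+1) \<le> n k" using h assms by simp
      finally show "n N \<le> n k" .
    qed
  qed
  then show "1 \<le> k \<Longrightarrow> k \<le> N \<Longrightarrow> n N \<le> n k" by blast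
qed

lemma kernel_kill1:
  assumes "v \<in> hspace N n" "\<forall>i. i \<notin> EE n 1 \<longrightarrow> v i = 0" "\<And>i a. a < n 1 \<Longrightarrow> A i (BL 1 a) = 0"
  shows "v \<in> kernel N n A"
proof (rule kernel_kill[OF assms(1)])
  fix i j
  show "A i j = 0 \<or> v j = 0"
    using assms(2,3) by (cases "j \<in> EE n 1") (auto simp: EE_def)
qed

context
  fixes N :: nat and n :: "nat \<Rightarrow> nat" and k :: nat
  assumes k1: "1 \<le> k" and kN: "k + 1 \<le> N" and nk: "n k > 0"
begin

lemma kernel_Zop: "v \<in> hspace N n \<Longrightarrow>
   v \<in> kernel N n (Zop n k) \<longleftrightarrow> (\<forall>b<n (k+1). (\<Sum>a<n k. zeta n k ^ (b*a) * v (BL k a)) = 0)"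
proof -
  assume v: "v \<in> hspace N n"
  show ?thesis
  proof
    assume "v \<in> kernel N n (Zop n k)"
    then have z: "apply_op N n (Zop n k) v i = 0" for i by (simp add: kernel_def)
    show "\<forall>b<n (k+1). (\<Sum>a<n k. zeta n k ^ (b*a) * v (BL k a)) = 0"
    proof (intro allI impI)
      fix b assume b: "b < n (k+1)"
      have "sc n k * (\<Sum>a<n k. zeta n k ^ (b*a) * v (BL k a)) = 0"
        using z[of "BL (k+1) b"] Zapp_BL[where n=n and k=k and N=N and v=v, OF k1 kN b] by simp
      then show "(\<Sum>a<n k. zeta n k ^ (b*a) * v (BL k a)) = 0"
        using sc_nz[of n k, OF nk] by simp
    qed
  next
    assume h: "\<forall>b<n (k+1). (\<Sum>a<n k. zeta n k ^ (b*a) * v (BL k a)) = 0"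
    have "apply_op N n (Zop n k) v i = 0" for i
    proof (cases "i \<in> EE n (k+1)")
      case True
      then obtain b where "b < n (k+1)" "i = BL (k+1) b" by (auto simp: EE_def)
      then show ?thesis using h Zapp_BL[where n=n and k=k and N=N and v=v, OF k1 kN] by simp
    next
      case False
      then show ?thesis using Zapp_zero[where n=n and k=k and N=N, OF k1 kN] by simp
    qed
    then show "v \<in> kernel N n (Zop n k)" using v by (simp add: kernel_def fun_eq_iff)
  qed
qed

lemma kernel_ZA:
  assumes "v \<in> kernel N n (adj (Zop n k))" "n (k+1) \<le> n k" "b < n (k+1)"
  shows "v (BL (k+1) b) = 0"
proof -
  have z: "apply_op N n (adj (Zop n k)) v i = 0" for i using assms(1) by (simp add: kernel_def)
  have s0: "(\<Sum>b<n (k+1). cnj (zeta n k ^ (b*a)) * v (BL (k+1) b)) = 0" if "a < n k" for a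
    using z[of "BL k a"] ZAapp_BL[where n=n and k=k and N=N, OF k1 kN that] sc_nz[of n k, OF nk] by simp
  have "of_nat (n k) * v (BL (k+1) b) = (\<Sum>a<n k. zeta n k ^ (b*a) * (\<Sum>b<n (k+1). cnj (zeta n k ^ (b*a)) * v (BL (k+1) b)))"
    by (rule ZZ_core[symmetric]) (use assms in auto)
  also have "\<dots> = 0" using s0 by simp
  finally show ?thesis using nk by simp
qed

lemma ZZstar:
  assumes "w \<in> hspace N n" "\<And>i. i \<notin> EE n (k+1) \<Longrightarrow> w i = 0" "n (k+1) \<le> n k"
  shows "apply_op N n (Zop n k) (apply_op N n (adj (Zop n k)) w) = w"
proof (rule ext)
  fix i
  show "apply_op N n (Zop n k) (apply_op N n (adj (Zop n k)) w) i = w i"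
  proof (cases "i \<in> EE n (k+1)")
    case True
    then obtain b where b: "b < n (k+1)" "i = BL (k+1) b" by (auto simp: EE_def)
    let ?S = "\<lambda>a. (\<Sum>b<n (k+1). cnj (zeta n k ^ (b*a)) * w (BL (k+1) b))"
    have "apply_op N n (Zop n k) (apply_op N n (adj (Zop n k)) w) i
        = sc n k * (\<Sum>a<n k. zeta n k ^ (b*a) * (sc n k * ?S a))"
      using b Zapp_BL[where n=n and k=k and N=N, OF k1 kN] ZAapp_BL[where n=n and k=k and N=N, OF k1 kN] by simp
    also have "\<dots> = sc n k * (sc n k * (\<Sum>a<n k. zeta n k ^ (b*a) * ?S a))"
    proof -
      have e: "\<And>a. zeta n k ^ (b*a) * (sc n k * ?S a) = sc n k * (zeta n k ^ (b*a) * ?S a)"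
        by (rule mult.left_commute)
      show ?thesis by (simp only: e sum_distrib_left[symmetric])
    qed
    also have "(\<Sum>a<n k. zeta n k ^ (b*a) * ?S a) = of_nat (n k) * w (BL (k+1) b)"
      by (rule ZZ_core) (use b assms in auto)
    also have "sc n k * (sc n k * (of_nat (n k) * w (BL (k+1) b))) = w (BL (k+1) b)"
      using sc_sq[of n k, OF nk] by (metis mult.assoc mult_1)
    finally show ?thesis using b by simp
  next
    case False
    then show ?thesis using Zapp_zero[where n=n and k=k and N=N, OF k1 kN] assms(2) by simp
  qed
qed

end


lemma kernel_zero_op: "kernel N n (\<lambda>i j. 0) = hspace N n"
  by (simp add: kernel_def apply_op_def fun_eq_iff)

lemma cre_nz: "r > 0 \<Longrightarrow> complex_of_real (sqrt r) \<noteq> 0"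
  by simp

theorem proposition3p5:
  fixes N :: nat and n :: "nat \<Rightarrow> nat" and Gam :: "sgn \<Rightarrow> omega \<Rightarrow> real"
  assumes "N \<ge> 2"
    and "\<And>k. 1 \<le> k \<Longrightarrow> k < N \<Longrightarrow> n (k + 1) \<le> n k"
    and "n N \<ge> 1"
    and "\<And>e w. w \<in> omegas N \<Longrightarrow> Gam e w > 0"
  shows "interaction_free N n Gam =
         op_range N n (\<lambda>i j. proj n 1 i j - mmult N n (adj (Zop n 1)) (Zop n 1) i j)"
proof -
  let ?B = "basis_idx N n"
  let ?M = "\<lambda>i j. proj n 1 i j - mmult N n (adj (Zop n 1)) (Zop n 1) i j"
  define S where "S = {v \<in> hspace N n. (\<forall>i. i \<notin> EE n 1 \<longrightarrow> v i = 0) \<and>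
      (\<forall>b<n 2. (\<Sum>a<n 1. zeta n 1 ^ (b*a) * v (BL 1 a)) = 0)}"
  have N2: "2 \<le> N" using assms(1) .
  have npos: "n k > 0" if "1 \<le> k" "k \<le> N" for k
  proof -
    have "n N \<le> n k" by (rule n_mono[of N n, OF assms(2) that])
    then show ?thesis using assms(3) by linarith
  qed
  have n21: "n 2 \<le> n 1" using assms(2)[of 1] N2 by (simp add: numeral_2_eq_2)
  have n1: "n 1 > 0" using npos N2 by simp
  have n2: "n 2 > 0" using npos N2 by simp
  have nN: "n N > 0" using assms(3) by simp
  have om: "OPlus \<in> omegas N" "OMinus \<in> omegas N" "\<And>k. 1 \<le> k \<Longrightarrow> k + 1 \<le> N \<Longrightarrow> OK k \<in> omegas N"
    by (auto simp: omegas_def)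
  have G: "\<And>e. Gam e OPlus > 0" "\<And>e. Gam e OMinus > 0" "\<And>e k. 1 \<le> k \<Longrightarrow> k + 1 \<le> N \<Longrightarrow> Gam e (OK k) > 0"
    by (rule assms(4)[OF om(1)], rule assms(4)[OF om(2)], rule assms(4)[OF om(3)]) assumption+
  have Gnz1: "Gam e OPlus \<noteq> 0" for e using G(1)[of e] by linarith
  have Gnz2: "Gam e OMinus \<noteq> 0" for e using G(2)[of e] by linarith
  have Gnz3: "n (Suc 0) \<noteq> 0" using n1 by simp
  note Gnz = Gnz1 Gnz2 Gnz3
  have kSmOP: "kernel N n (kraus N n Gam SMinus OPlus) = kernel N n (outer (phi n 1 0) (ket BPlus))"
    unfolding kraus_def by (simp add: kernel_smult Gnz)
  have aSmOP: "kernel N n (adj (kraus N n Gam SMinus OPlus)) = kernel N n (outer (ket BPlus) (phi n 1 0))"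
    unfolding kraus_def by (simp add: adj_smult adj_outer kernel_smult Gnz)
  have kSpOP: "kernel N n (kraus N n Gam SPlus OPlus) = kernel N n (outer (ket BPlus) (phi n 1 0))"
    unfolding kraus_def by (simp add: kernel_smult Gnz)
  have aSpOP: "kernel N n (adj (kraus N n Gam SPlus OPlus)) = kernel N n (outer (phi n 1 0) (ket BPlus))"
    unfolding kraus_def by (simp add: adj_smult adj_outer kernel_smult Gnz)
  have kSmOM: "kernel N n (kraus N n Gam SMinus OMinus) = kernel N n (outer (ket BMinus) (phi n N 0))"
    unfolding kraus_def by (simp add: kernel_smult Gnz)
  have aSmOM: "kernel N n (adj (kraus N n Gam SMinus OMinus)) = kernel N n (outer (phi n N 0) (ket BMinus))"
    unfolding kraus_def by (simp add: adj_smult adj_outer kernel_smult Gnz)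
  have kSpOM: "kernel N n (kraus N n Gam SPlus OMinus) = hspace N n"
    unfolding kraus_def by (simp add: kernel_zero_op)
  have aSpOM: "kernel N n (adj (kraus N n Gam SPlus OMinus)) = hspace N n"
    unfolding kraus_def by (simp add: adj_zero kernel_zero_op)
  have kSmOK: "kernel N n (kraus N n Gam SMinus (OK k)) = kernel N n (Zop n k)"
    if "1 \<le> k" "k + 1 \<le> N" for k
    unfolding kraus_def by (simp add: kernel_smult less_imp_neq[OF G(3)[OF that], symmetric])
  have aSmOK: "kernel N n (adj (kraus N n Gam SMinus (OK k))) = kernel N n (adj (Zop n k))"
    if "1 \<le> k" "k + 1 \<le> N" for k
    unfolding kraus_def by (simp add: adj_smult kernel_smult less_imp_neq[OF G(3)[OF that], symmetric])
  have kSpOK: "kernel N n (kraus N n Gam SPlus (OK k)) = kernel N n (adj (Zop n k))"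
    if "1 \<le> k" "k + 1 \<le> N" for k
    unfolding kraus_def by (simp add: kernel_smult less_imp_neq[OF G(3)[OF that], symmetric])
  have aSpOK: "kernel N n (adj (kraus N n Gam SPlus (OK k))) = kernel N n (Zop n k)"
    if "1 \<le> k" "k + 1 \<le> N" for k
    unfolding kraus_def by (simp add: adj_smult adj_adj kernel_smult less_imp_neq[OF G(3)[OF that], symmetric])

  have kerh: "kernel N n A \<subseteq> hspace N n" for A by (auto simp: kernel_def)

  have W_iff: "v \<in> interaction_free N n Gam \<longleftrightarrow>
      v \<in> hspace N n \<and> v \<in> kernel N n (outer (phi n 1 0) (ket BPlus)) \<and>
      v \<in> kernel N n (outer (ket BPlus) (phi n 1 0)) \<and>
      v \<in> kernel N n (outer (ket BMinus) (phi n N 0)) \<and>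
      v \<in> kernel N n (outer (phi n N 0) (ket BMinus)) \<and>
      (\<forall>k. 1 \<le> k \<longrightarrow> k + 1 \<le> N \<longrightarrow> v \<in> kernel N n (Zop n k) \<and> v \<in> kernel N n (adj (Zop n k)))" for v
  proof
    assume v: "v \<in> interaction_free N n Gam"
    then have h: "\<And>w e. w \<in> omegas N \<Longrightarrow> e \<in> {SPlus, SMinus} \<Longrightarrow>
        v \<in> kernel N n (kraus N n Gam e w) \<and> v \<in> kernel N n (adj (kraus N n Gam e w))"
      by (auto simp: interaction_free_def)
    show "v \<in> hspace N n \<and> v \<in> kernel N n (outer (phi n 1 0) (ket BPlus)) \<and>
      v \<in> kernel N n (outer (ket BPlus) (phi n 1 0)) \<and>
      v \<in> kernel N n (outer (ket BMinus) (phi n N 0)) \<and>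
      v \<in> kernel N n (outer (phi n N 0) (ket BMinus)) \<and>
      (\<forall>k. 1 \<le> k \<longrightarrow> k + 1 \<le> N \<longrightarrow> v \<in> kernel N n (Zop n k) \<and> v \<in> kernel N n (adj (Zop n k)))"
    proof (intro conjI allI impI)
      show "v \<in> hspace N n" using v by (simp add: interaction_free_def)
      show "v \<in> kernel N n (outer (phi n 1 0) (ket BPlus))"
        using h[OF om(1), of SMinus] kSmOP by simp
      show "v \<in> kernel N n (outer (ket BPlus) (phi n 1 0))"
        using h[OF om(1), of SMinus] aSmOP by simp
      show "v \<in> kernel N n (outer (ket BMinus) (phi n N 0))"
        using h[OF om(2), of SMinus] kSmOM by simp
      show "v \<in> kernel N n (outer (phi n N 0) (ket BMinus))"
        using h[OF om(2), of SMinus] aSmOM by simp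
      fix k assume k: "1 \<le> k" "k + 1 \<le> N"
      show "v \<in> kernel N n (Zop n k)"
        using h[OF om(3)[OF k], of SMinus] kSmOK[OF k] by simp
      show "v \<in> kernel N n (adj (Zop n k))"
        using h[OF om(3)[OF k], of SMinus] aSmOK[OF k] by simp
    qed
  next
    assume r: "v \<in> hspace N n \<and> v \<in> kernel N n (outer (phi n 1 0) (ket BPlus)) \<and>
      v \<in> kernel N n (outer (ket BPlus) (phi n 1 0)) \<and>
      v \<in> kernel N n (outer (ket BMinus) (phi n N 0)) \<and>
      v \<in> kernel N n (outer (phi n N 0) (ket BMinus)) \<and>
      (\<forall>k. 1 \<le> k \<longrightarrow> k + 1 \<le> N \<longrightarrow> v \<in> kernel N n (Zop n k) \<and> v \<in> kernel N n (adj (Zop n k)))"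
    have "v \<in> kernel N n (kraus N n Gam e w) \<and> v \<in> kernel N n (adj (kraus N n Gam e w))"
      if "w \<in> omegas N" for e w
    proof (cases w)
      case OPlus
      then show ?thesis using r kSmOP aSmOP kSpOP aSpOP by (cases e) auto
    next
      case OMinus
      then show ?thesis using r kSmOM aSmOM kSpOM aSpOM by (cases e) auto
    next
      case (OK k)
      then have k: "1 \<le> k" "k + 1 \<le> N" using that N2 by (auto simp: omegas_def)
      then show ?thesis using r OK kSmOK[OF k] aSmOK[OF k] kSpOK[OF k] aSpOK[OF k] by (cases e) auto
    qed
    then show "v \<in> interaction_free N n Gam" using r by (auto simp: interaction_free_def)
  qed

  have ketPP: "ket BPlus BPlus \<noteq> 0" by (simp add: ket_def)
  have phi10: "phi n 1 0 (BL 1 0) \<noteq> 0" using n1 by (simp add: phi_BL sc_nz)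
  have phiN0: "phi n N 0 (BL N 0) \<noteq> 0" using nN by (simp add: phi_BL sc_nz)
  have B10: "BL 1 0 \<in> ?B" using n1 N2 by (simp add: BL_in_B)
  have BN0: "BL N 0 \<in> ?B" using nN N2 by (simp add: BL_in_B)

  have WS: "interaction_free N n Gam = S"
  proof
    show "interaction_free N n Gam \<subseteq> S"
    proof
      fix v assume "v \<in> interaction_free N n Gam"
      then have r: "v \<in> hspace N n" "v \<in> kernel N n (outer (phi n 1 0) (ket BPlus))"
        "v \<in> kernel N n (outer (phi n N 0) (ket BMinus))"
        "\<And>k. 1 \<le> k \<Longrightarrow> k + 1 \<le> N \<Longrightarrow> v \<in> kernel N n (Zop n k) \<and> v \<in> kernel N n (adj (Zop n k))"
        unfolding W_iff by blast+
      have "(\<Sum>j\<in>?B. cnj (ket BPlus j) * v j) = 0"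
        using r(2) kernel_outer[where x="phi n 1 0" and y="ket BPlus", OF B10 phi10] by blast
      then have vP: "v BPlus = 0" by (simp only: ket_sum[OF pm_in_B(2)])
      have "(\<Sum>j\<in>?B. cnj (ket BMinus j) * v j) = 0"
        using r(3) kernel_outer[where x="phi n N 0" and y="ket BMinus", OF BN0 phiN0] by blast
      then have vM: "v BMinus = 0" by (simp only: ket_sum[OF pm_in_B(1)])
      have vk: "v (BL k' b) = 0" if "2 \<le> k'" "k' \<le> N" "b < n k'" for k' b
      proof -
        define k where "k = k' - 1"
        have k: "k' = k + 1" "1 \<le> k" using that by (auto simp: k_def)
        have "k + 1 \<le> N" using k that by simp
        then show ?thesis
          using kernel_ZA[of k N n v b] r(4)[of k] k that npos[of k] assms(2)[of k] by simp
      qed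
      have supp: "\<forall>i. i \<notin> EE n 1 \<longrightarrow> v i = 0"
      proof (intro allI impI)
        fix i assume i: "i \<notin> EE n 1"
        show "v i = 0"
        proof (cases "i \<in> ?B")
          case False then show ?thesis using r(1) by (simp add: hspace_def)
        next
          case True
          show ?thesis
          proof (cases i)
            case BMinus then show ?thesis using vM by simp
          next
            case BPlus then show ?thesis using vP by simp
          next
            case (BL k' b)
            then have "1 \<le> k'" "k' \<le> N" "b < n k'" using True by (auto simp: BL_in_B)
            moreover have "k' \<noteq> 1" using i BL \<open>b < n k'\<close> by (auto simp: EE_def)
            ultimately show ?thesis using vk BL by simp
          qed
        qed
      qed
      have z1: "\<forall>b<n 2. (\<Sum>a<n 1. zeta n 1 ^ (b*a) * v (BL 1 a)) = 0"
        using r(4)[of 1] N2 kernel_Zop[of 1 N n v] n1 r(1) by (simp add: numeral_2_eq_2)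
      show "v \<in> S" unfolding S_def using r(1) supp z1 by blast
    qed
  next
    show "S \<subseteq> interaction_free N n Gam"
    proof
      fix v assume "v \<in> S"
      then have v: "v \<in> hspace N n" and supp: "\<forall>i. i \<notin> EE n 1 \<longrightarrow> v i = 0"
        and z1: "\<forall>b<n 2. (\<Sum>a<n 1. zeta n 1 ^ (b*a) * v (BL 1 a)) = 0"
        unfolding S_def by blast+
      have a1: "v \<in> kernel N n (outer (phi n 1 0) (ket BPlus))"
        by (rule kernel_kill1[OF v supp]) (simp add: outer_def ket_def)
      have "(\<Sum>j\<in>?B. cnj (phi n 1 0 j) * v j) = (\<Sum>a<n 1. cnj (phi n 1 0 (BL 1 a)) * v (BL 1 a))"
        by (rule sum_E) (use supp N2 in auto)
      also have "\<dots> = sc n 1 * (\<Sum>a<n 1. zeta n 1 ^ (0*a) * v (BL 1 a))"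
        by (simp add: phi_BL sum_distrib_left)
      also have "\<dots> = 0" using z1[rule_format, of 0] n2 by simp
      finally have a2: "v \<in> kernel N n (outer (ket BPlus) (phi n 1 0))"
        using kernel_outer[where x="ket BPlus" and y="phi n 1 0" and N=N and n=n, OF pm_in_B(2) ketPP] v by simp
      have a3: "v \<in> kernel N n (outer (ket BMinus) (phi n N 0))"
        by (rule kernel_kill1[OF v supp]) (use N2 in \<open>simp add: outer_def phi_BL\<close>)
      have a4: "v \<in> kernel N n (outer (phi n N 0) (ket BMinus))"
        by (rule kernel_kill1[OF v supp]) (simp add: outer_def ket_def)
      have a5: "v \<in> kernel N n (Zop n k) \<and> v \<in> kernel N n (adj (Zop n k))"
        if "1 \<le> k" "k + 1 \<le> N" for k
      proof
        show "v \<in> kernel N n (Zop n k)"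
        proof (cases "k = 1")
          case True
          then show ?thesis using kernel_Zop[of 1 N n v] that n1 v z1 by (simp add: numeral_2_eq_2)
        next
          case False
          show ?thesis
            by (rule kernel_kill1[OF v supp]) (use False in \<open>auto intro!: Zop_zero simp: EE_def\<close>)
        qed
        show "v \<in> kernel N n (adj (Zop n k))"
          by (rule kernel_kill1[OF v supp]) (use that in \<open>auto intro!: Zop_zero simp: EE_def adj_def\<close>)
      qed
      show "v \<in> interaction_free N n Gam"
        unfolding W_iff using v a1 a2 a3 a4 a5 by blast
    qed
  qed

  have RS: "op_range N n ?M = S"
  proof
    show "S \<subseteq> op_range N n ?M"
    proof
      fix v assume "v \<in> S"
      then have v: "v \<in> hspace N n" and supp: "\<forall>i. i \<notin> EE n 1 \<longrightarrow> v i = 0"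
        and z1: "\<forall>b<n 2. (\<Sum>a<n 1. zeta n 1 ^ (b*a) * v (BL 1 a)) = 0"
        unfolding S_def by blast+
      have zv: "apply_op N n (Zop n 1) v = (\<lambda>i. 0)"
        using kernel_Zop[of 1 N n v] N2 n1 v z1 by (simp add: kernel_def numeral_2_eq_2)
      have "apply_op N n ?M v = (\<lambda>i. apply_op N n (proj n 1) v i - apply_op N n (adj (Zop n 1)) (apply_op N n (Zop n 1) v) i)"
        by (simp add: apply_diff apply_mmult)
      also have "\<dots> = v"
        unfolding zv apply_zero_vec using apply_P[OF v, of 1] N2 supp by (auto simp: fun_eq_iff)
      finally have "v = apply_op N n ?M v" by simp
      then show "v \<in> op_range N n ?M" unfolding op_range_def using v by blast
    qed
  next
    show "op_range N n ?M \<subseteq> S"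
    proof
      fix v assume "v \<in> op_range N n ?M"
      then obtain u where u: "u \<in> hspace N n" and vu: "v = apply_op N n ?M u"
        unfolding op_range_def by blast
      have v: "v \<in> hspace N n" using vu apply_hspace by simp
      have supp: "\<forall>i. i \<notin> EE n 1 \<longrightarrow> v i = 0"
      proof (intro allI impI)
        fix i assume i: "i \<notin> EE n 1"
        show "v i = 0" unfolding vu
          by (rule apply_rows) (use i in \<open>simp add: proj_entry mmult_def adj_def Zop_zero\<close>)
      qed
      have v_eq: "v = (\<lambda>i. (if i \<in> EE n 1 then u i else 0) - apply_op N n (adj (Zop n 1)) (apply_op N n (Zop n 1) u) i)"
        unfolding vu using apply_P[OF u, of 1] N2 by (simp add: apply_diff apply_mmult)
      have zr: "apply_op N n (Zop n 1) (\<lambda>i. if i \<in> EE n 1 then u i else 0) = apply_op N n (Zop n 1) u"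
        by (rule apply_restrict) (simp add: Zop_zero)
      have zz: "apply_op N n (Zop n 1) (apply_op N n (adj (Zop n 1)) (apply_op N n (Zop n 1) u)) = apply_op N n (Zop n 1) u"
        by (rule ZZstar[of 1 N n]) (use N2 n1 n21 in \<open>auto simp: apply_hspace Zapp_zero numeral_2_eq_2\<close>)
      have "apply_op N n (Zop n 1) v = (\<lambda>i. 0)"
        by (subst v_eq, subst apply_lin_diff, unfold zr zz) simp
      then have "v \<in> kernel N n (Zop n 1)" using v by (simp add: kernel_def)
      then have z1: "\<forall>b<n 2. (\<Sum>a<n 1. zeta n 1 ^ (b*a) * v (BL 1 a)) = 0"
        using kernel_Zop[of 1 N n v] N2 n1 v by (simp add: numeral_2_eq_2)
      show "v \<in> S" unfolding S_def using v supp z1 by blast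
    qed
  qed
  show ?thesis using WS RS by simp
qed

end
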